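(* For any weighted undirected graph $G=(V,E,w)$ with $n=|V|\ge2$ and any HC-tree $\mathcal T$ of $G$, $$C_G(\mathcal T)\ \ge\ \frac n3\cdot\min\Big\{w(S,\bar S)\ :\ S\subseteq V,\ \frac n3\le |S|,|\bar S|\le\frac{2n}3\Big\}.$$
   Context: For $G=(V,E,w)$ with nonnegative weights, an HC-tree is a rooted tree whose leaves are in bijection with $V$; its cost is $C_G(\mathcal T)=\sum_{(u,v)\in E}w(u,v)\,|\mathrm{leaves}(\mathcal T[u\vee v])|$ where $u\vee v$ is the lowest common ancestor and $\mathrm{leaves}(\mathcal T[z])$ the leaf set of the subtree rooted at $z$. $\bar S=V\setminus S$, and $w(S,\bar S)$ is the total weight of edges between $S$ and $\bar S$. *)

theory Defs
  imports Main "HOL.Real"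
begin

datatype 'a hct = Leaf 'a | Node "'a hct list"

fun leaves :: "'a hct \<Rightarrow> 'a list" where
  "leaves (Leaf a) = [a]"
| "leaves (Node ts) = concat (map leaves ts)"

fun subtrees :: "'a hct \<Rightarrow> 'a hct set" where
  "subtrees (Leaf a) = {Leaf a}"
| "subtrees (Node ts) = insert (Node ts) (\<Union>t\<in>set ts. subtrees t)"

fun wf_hct :: "'a hct \<Rightarrow> bool" where
  "wf_hct (Leaf a) = True"
| "wf_hct (Node ts) = (ts \<noteq> [] \<and> (\<forall>t\<in>set ts. wf_hct t))"

definition is_hc_tree :: "'a set \<Rightarrow> 'a hct \<Rightarrow> bool" where
  "is_hc_tree V T \<longleftrightarrow> wf_hct T \<and> distinct (leaves T) \<and> set (leaves T) = V"

text \<open>Number of leaves of the subtree rooted at the lowest common ancestor of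
the vertices in e: the lowest node whose subtree contains e.\<close>
definition lca_size :: "'a hct \<Rightarrow> 'a set \<Rightarrow> nat" where
  "lca_size T e = Min {card (set (leaves s)) | s. s \<in> subtrees T \<and> e \<subseteq> set (leaves s)}"

definition wgraph :: "'a set \<Rightarrow> 'a set set \<Rightarrow> ('a set \<Rightarrow> real) \<Rightarrow> bool" where
  "wgraph V E w \<longleftrightarrow> finite V \<and>
     E \<subseteq> {{u, v} | u v. u \<in> V \<and> v \<in> V \<and> u \<noteq> v} \<and> (\<forall>e\<in>E. w e \<ge> 0)"

definition hc_cost :: "'a set set \<Rightarrow> ('a set \<Rightarrow> real) \<Rightarrow> 'a hct \<Rightarrow> real" where
  "hc_cost E w T = (\<Sum>e\<in>E. w e * real (lca_size T e))"

definition cut_weight :: "'a set \<Rightarrow> 'a set set \<Rightarrow> ('a set \<Rightarrow> real) \<Rightarrow> 'a set \<Rightarrow> real" where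
  "cut_weight V E w S = (\<Sum>e\<in>{e\<in>E. e \<inter> S \<noteq> {} \<and> e \<inter> (V - S) \<noteq> {}}. w e)"

end

theory Submission
  imports Defs
begin

lemma disj_concat:
  "distinct (concat (map f xs)) \<Longrightarrow> x \<in> set xs \<Longrightarrow> y \<in> set xs \<Longrightarrow> x \<noteq> y
   \<Longrightarrow> set (f x) \<inter> set (f y) = {}"
  by (induction xs) auto

lemma subtrees_leaves:
  "s \<in> subtrees t \<Longrightarrow> set (leaves s) \<subseteq> set (leaves t) \<and> (distinct (leaves t) \<longrightarrow> distinct (leaves s))"
proof (induction t arbitrary: s)
  case (Leaf a) then show ?case by simp
next
  case (Node ts)
  show ?case
  proof (cases "s = Node ts")
    case True then show ?thesis by simp
  next
    case False
    then obtain c where c: "c \<in> set ts" "s \<in> subtrees c" using Node.prems by auto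
    have "distinct (leaves (Node ts)) \<Longrightarrow> distinct (leaves c)"
      using c(1) by (auto simp: distinct_concat_iff)
    moreover have "set (leaves c) \<subseteq> set (leaves (Node ts))" using c(1) by auto
    ultimately show ?thesis using Node.IH[OF c] by auto
  qed
qed

lemma finite_subtrees: "finite (subtrees t)"
  by (induction t) auto

lemma subtrees_self: "t \<in> subtrees t"
  by (cases t) auto

lemma key:
  "wf_hct t \<Longrightarrow> distinct (leaves t) \<Longrightarrow> 2 \<le> n \<Longrightarrow> real (length (leaves t)) > 2 * real n / 3 \<Longrightarrow>
   \<exists>S. S \<subseteq> set (leaves t) \<and> real n / 3 \<le> real (card S) \<and> real (card S) \<le> 2 * real n / 3 \<and>
     (\<forall>s\<in>subtrees t. S \<inter> set (leaves s) \<noteq> {} \<and> \<not> set (leaves s) \<subseteq> S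
        \<longrightarrow> real (length (leaves s)) > 2 * real n / 3)"
proof (induction t)
  case (Leaf a)
  then show ?case by simp
next
  case (Node ts)
  have wfc: "\<And>c. c \<in> set ts \<Longrightarrow> wf_hct c" using Node.prems(1) by simp
  have dc: "distinct (concat (map leaves ts))" using Node.prems(2) by simp
  have dcc: "\<And>c. c \<in> set ts \<Longrightarrow> distinct (leaves c)" using dc by (auto simp: distinct_concat_iff)
  have dj: "\<And>c c'. c \<in> set ts \<Longrightarrow> c' \<in> set ts \<Longrightarrow> c \<noteq> c' \<Longrightarrow> set (leaves c) \<inter> set (leaves c') = {}"
    using disj_concat[OF dc] by blast
  have sub: "\<And>s. s \<in> subtrees (Node ts) \<Longrightarrow> s \<noteq> Node ts \<Longrightarrow> \<exists>c\<in>set ts. s \<in> subtrees c \<and> set (leaves s) \<subseteq> set (leaves c)"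
    using subtrees_leaves by fastforce
  show ?case
  proof (cases "\<exists>c\<in>set ts. real (length (leaves c)) > 2 * real n / 3")
    case True
    then obtain c where c: "c \<in> set ts" "real (length (leaves c)) > 2 * real n / 3" by blast
    from Node.IH[OF c(1) wfc[OF c(1)] dcc[OF c(1)] Node.prems(3) c(2)]
    obtain S where S: "S \<subseteq> set (leaves c)" "real n / 3 \<le> real (card S)" "real (card S) \<le> 2 * real n / 3"
      "\<forall>s\<in>subtrees c. S \<inter> set (leaves s) \<noteq> {} \<and> \<not> set (leaves s) \<subseteq> S
        \<longrightarrow> real (length (leaves s)) > 2 * real n / 3" by blast
    show ?thesis
    proof (intro exI conjI ballI impI)
      show "S \<subseteq> set (leaves (Node ts))" using S(1) c(1) by auto
      fix s assume s: "s \<in> subtrees (Node ts)" and h: "S \<inter> set (leaves s) \<noteq> {} \<and> \<not> set (leaves s) \<subseteq> S"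
      show "real (length (leaves s)) > 2 * real n / 3"
      proof (cases "s = Node ts")
        case True then show ?thesis using Node.prems(4) by simp
      next
        case False
        then obtain c' where c': "c' \<in> set ts" "s \<in> subtrees c'" "set (leaves s) \<subseteq> set (leaves c')"
          using sub[OF s] by blast
        show ?thesis
        proof (cases "c' = c")
          case True then show ?thesis using S(4) c' h by blast
        next
          case False
          then have "set (leaves c) \<inter> set (leaves c') = {}" using dj c(1) c'(1) by metis
          then show ?thesis using h c'(3) S(1) by blast
        qed
      qed
    qed (use S in auto)
  next
    case False
    then have small: "\<And>c. c \<in> set ts \<Longrightarrow> real (length (leaves c)) \<le> 2 * real n / 3" by force
    have gen: "\<And>S. (\<forall>c\<in>set ts. set (leaves c) \<subseteq> S \<or> set (leaves c) \<inter> S = {}) \<Longrightarrow>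
       \<forall>s\<in>subtrees (Node ts). S \<inter> set (leaves s) \<noteq> {} \<and> \<not> set (leaves s) \<subseteq> S
        \<longrightarrow> real (length (leaves s)) > 2 * real n / 3"
    proof (intro ballI impI)
      fix S s assume A: "\<forall>c\<in>set ts. set (leaves c) \<subseteq> S \<or> set (leaves c) \<inter> S = {}"
        and s: "s \<in> subtrees (Node ts)" and h: "S \<inter> set (leaves s) \<noteq> {} \<and> \<not> set (leaves s) \<subseteq> S"
      show "real (length (leaves s)) > 2 * real n / 3"
      proof (cases "s = Node ts")
        case True then show ?thesis using Node.prems(4) by simp
      next
        case False
        then obtain c' where c': "c' \<in> set ts" "set (leaves s) \<subseteq> set (leaves c')"
          using sub[OF s] by blast
        then show ?thesis using A h by blast
      qed
    qed
    show ?thesis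
    proof (cases "\<exists>c\<in>set ts. real n / 3 \<le> real (length (leaves c))")
      case True
      then obtain c where c: "c \<in> set ts" "real n / 3 \<le> real (length (leaves c))" by blast
      have "\<forall>c'\<in>set ts. set (leaves c') \<subseteq> set (leaves c) \<or> set (leaves c') \<inter> set (leaves c) = {}"
        using dj c(1) by blast
      from gen[OF this] show ?thesis
        using c small[OF c(1)] distinct_card[OF dcc[OF c(1)]] by (intro exI[of _ "set (leaves c)"]) auto
    next
      case False
      then have tiny: "\<And>c. c \<in> set ts \<Longrightarrow> real (length (leaves c)) < real n / 3" by force
      define g where "g k = length (concat (map leaves (take k ts)))" for k
      have gS: "\<And>k. k < length ts \<Longrightarrow> g (Suc k) = g k + length (leaves (ts ! k))"
        by (simp add: g_def take_Suc_conv_app_nth)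
      have gL: "g (length ts) = length (leaves (Node ts))" by (simp add: g_def)
      define k where "k = (LEAST k. real n / 3 \<le> real (g k))"
      have ex: "real n / 3 \<le> real (g (length ts))" using gL Node.prems(4) by simp
      have k1: "real n / 3 \<le> real (g k)" unfolding k_def by (rule LeastI[of _ "length ts"], rule ex)
      have kle: "k \<le> length ts" unfolding k_def by (rule Least_le, rule ex)
      have "k \<noteq> 0" using k1 Node.prems(3) by (cases k) (auto simp: g_def)
      then obtain j where j: "k = Suc j" by (cases k) auto
      have j2: "\<not> real n / 3 \<le> real (g j)" using not_less_Least[of j "\<lambda>k. real n / 3 \<le> real (g k)"] j k_def by simp
      have jl: "j < length ts" using kle j by simp
      have gk: "g k = g j + length (leaves (ts ! j))" using gS[OF jl] j by simp
      have "real (length (leaves (ts ! j))) < real n / 3" using tiny jl by simp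
      then have k2: "real (g k) \<le> 2 * real n / 3" using gk j2 by simp
      define S where "S = set (concat (map leaves (take k ts)))"
      have split: "concat (map leaves ts) = concat (map leaves (take k ts)) @ concat (map leaves (drop k ts))"
        by (metis append_take_drop_id concat_append map_append)
      have dS: "distinct (concat (map leaves (take k ts)))" using dc split by (metis distinct_append)
      have cardS: "card S = g k" unfolding S_def g_def by (rule distinct_card[OF dS])
      have part: "\<forall>c\<in>set ts. set (leaves c) \<subseteq> S \<or> set (leaves c) \<inter> S = {}"
      proof
        fix c assume c: "c \<in> set ts"
        show "set (leaves c) \<subseteq> S \<or> set (leaves c) \<inter> S = {}"
        proof (cases "c \<in> set (take k ts)")
          case True then show ?thesis unfolding S_def by auto
        next
          case False
          have "\<forall>c'\<in>set (take k ts). set (leaves c) \<inter> set (leaves c') = {}"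
            using dj c False in_set_takeD by metis
          then show ?thesis unfolding S_def by auto
        qed
      qed
      have "S \<subseteq> set (leaves (Node ts))" unfolding S_def by (auto dest: in_set_takeD)
      then show ?thesis using gen[OF part] cardS k1 k2 by (intro exI[of _ S]) auto
    qed
  qed
qed

theorem lemma5p8:
  fixes V :: "'a set" and E :: "'a set set" and w :: "'a set \<Rightarrow> real" and T :: "'a hct"
  assumes "wgraph V E w"
    and "card V \<ge> 2"
    and "is_hc_tree V T"
  shows "hc_cost E w T \<ge> real (card V) / 3 *
    Min {cut_weight V E w S | S. S \<subseteq> V
           \<and> real (card V) / 3 \<le> real (card S) \<and> real (card S) \<le> 2 * real (card V) / 3
           \<and> real (card V) / 3 \<le> real (card (V - S)) \<and> real (card (V - S)) \<le> 2 * real (card V) / 3}"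
proof -
  let ?n = "card V"
  have fV: "finite V" and EV: "E \<subseteq> {{u, v} | u v. u \<in> V \<and> v \<in> V \<and> u \<noteq> v}" and wpos: "\<forall>e\<in>E. w e \<ge> 0"
    using assms(1) unfolding wgraph_def by auto
  have wf: "wf_hct T" and dT: "distinct (leaves T)" and LV: "set (leaves T) = V"
    using assms(3) unfolding is_hc_tree_def by auto
  have lenT: "length (leaves T) = ?n" using distinct_card[OF dT] LV by simp
  have "real (length (leaves T)) > 2 * real ?n / 3" using lenT assms(2) by simp
  from key[OF wf dT assms(2) this] obtain S where S: "S \<subseteq> V" "real ?n / 3 \<le> real (card S)"
    "real (card S) \<le> 2 * real ?n / 3"
    and P: "\<forall>s\<in>subtrees T. S \<inter> set (leaves s) \<noteq> {} \<and> \<not> set (leaves s) \<subseteq> S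
        \<longrightarrow> real (length (leaves s)) > 2 * real ?n / 3" using LV by blast
  have cVS: "card (V - S) = ?n - card S" using card_Diff_subset[OF finite_subset[OF S(1) fV] S(1)] .
  have cSle: "card S \<le> ?n" using card_mono[OF fV S(1)] .
  let ?M = "{cut_weight V E w S | S. S \<subseteq> V
           \<and> real (card V) / 3 \<le> real (card S) \<and> real (card S) \<le> 2 * real (card V) / 3
           \<and> real (card V) / 3 \<le> real (card (V - S)) \<and> real (card (V - S)) \<le> 2 * real (card V) / 3}"
  have inM: "cut_weight V E w S \<in> ?M"
    using S cVS cSle by (auto simp: of_nat_diff)
  have finM: "finite ?M"
  proof -
    have "?M \<subseteq> (\<lambda>S. cut_weight V E w S) ` Pow V" by auto
    then show ?thesis using finite_subset fV by blast
  qed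
  have minle: "Min ?M \<le> cut_weight V E w S" using Min_le[OF finM inM] .
  have fE: "finite E"
  proof -
    have "E \<subseteq> Pow V" using EV by auto
    then show ?thesis using finite_subset finite_Pow_iff[THEN iffD2, OF fV] by blast
  qed
  let ?C = "{e\<in>E. e \<inter> S \<noteq> {} \<and> e \<inter> (V - S) \<noteq> {}}"
  have lca: "real (lca_size T e) \<ge> real ?n / 3" if e: "e \<in> ?C" for e
  proof -
    have eV: "e \<subseteq> V" using e EV by auto
    let ?A = "{card (set (leaves s)) | s. s \<in> subtrees T \<and> e \<subseteq> set (leaves s)}"
    have finA: "finite ?A" using finite_subtrees[of T] by simp
    have neA: "?A \<noteq> {}" using subtrees_self[of T] eV LV by auto
    have "\<forall>a\<in>?A. real ?n / 3 \<le> real a"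
    proof
      fix a assume "a \<in> ?A"
      then obtain s where s: "a = card (set (leaves s))" "s \<in> subtrees T" "e \<subseteq> set (leaves s)" by blast
      have "S \<inter> set (leaves s) \<noteq> {} \<and> \<not> set (leaves s) \<subseteq> S" using e s(3) by blast
      then have "real (length (leaves s)) > 2 * real ?n / 3" using P s(2) by blast
      moreover have "distinct (leaves s)" using subtrees_leaves[OF s(2)] dT by blast
      ultimately show "real ?n / 3 \<le> real a" using s(1) distinct_card by fastforce
    qed
    then have "real ?n / 3 \<le> real (Min ?A)" using Min_in[OF finA neA] by blast
    then show ?thesis unfolding lca_size_def by simp
  qed
  have "real ?n / 3 * Min ?M \<le> real ?n / 3 * cut_weight V E w S"
    using minle by (simp add: mult_left_mono)
  also have "\<dots> = (\<Sum>e\<in>?C. real ?n / 3 * w e)"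
    unfolding cut_weight_def by (simp add: sum_distrib_left)
  also have "\<dots> \<le> (\<Sum>e\<in>?C. w e * real (lca_size T e))"
  proof (rule sum_mono)
    fix e assume e: "e \<in> ?C"
    then have "w e \<ge> 0" using wpos by auto
    then show "real ?n / 3 * w e \<le> w e * real (lca_size T e)"
      using lca[OF e] mult_left_mono[OF lca[OF e], of "w e"] by (simp add: algebra_simps)
  qed
  also have "\<dots> \<le> (\<Sum>e\<in>E. w e * real (lca_size T e))"
    by (rule sum_mono2[OF fE]) (use wpos in auto)
  finally show ?thesis unfolding hc_cost_def .
qed

end
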